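(* Let $A$ be a $\boldsymbol{\mathit{ba}\ell}$-algebra, $B$ the free boolean extension of ${\sf Arch}(A)$, and work in $D(\mathbb R[B])$. (1) For every $I\in{\sf Arch}(A)$, $x_I=\bigvee\{x_{\lnot J}\mid J\in{\sf Arch}(A),\ J\vee I=A\}$. (2) If $0\le f\in D(\mathbb R[B])$, then there are reals $r_I\ge0$ ($I\in{\sf Arch}(A)$) with $f=\bigvee\{r_Ix_{\lnot I}\mid I\in{\sf Arch}(A)\}$. (3) If $0\le f\in D(\mathbb R[B])$, $0\le t\in\mathbb R$, and $f=\bigvee\{r_Ix_{\lnot I}\mid I\in{\sf Arch}(A)\}$ with all $r_I\ge0$, then $f+t=\bigvee\{(t+r_I)x_{\lnot I}\mid I\in{\sf Arch}(A)\}$.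
   Context: A $\boldsymbol{\mathit{ba}\ell}$-algebra is a commutative unital lattice-ordered algebra $A$ over $\mathbb R$ that is bounded (for every $a\in A$ there is an integer $n\ge1$ with $a\le n\cdot1$) and archimedean (if $na\le b$ for all $n\ge1$ then $a\le0$). An $\ell$-ideal is a ring ideal $I$ with $|a|\le|b|$, $b\in I\Rightarrow a\in I$; it is archimedean if $A/I$ is archimedean. ${\sf Arch}(A)$ is the set of archimedean $\ell$-ideals ordered by inclusion; it is a compact regular frame, with meet $\cap$ and join $I\vee J$ the least archimedean $\ell$-ideal containing $I\cup J$. $B$ is the free boolean extension of the bounded distributive lattice ${\sf Arch}(A)$ (boolean algebra generated by ${\sf Arch}(A)$ as a bounded sublattice, with the universal property for bounded lattice maps into boolean algebras); ${\sf Arch}(A)\subseteq B$ and $\lnot$ is complement in $B$. $\mathbb R[B]$ is the quotient of $\mathbb R[x_e\mid e\in B]$ by the ideal generated by $x_{e\wedge f}-x_ex_f$, $x_{e\vee f}-(x_e+x_f-x_ex_f)$, $x_{\lnot e}-(1-x_e)$, $x_0$; it is a $\boldsymbol{\mathit{ba}\ell}$-algebra. $D(\mathbb R[B])$ is its Dedekind completion (Dedekind complete $\boldsymbol{\mathit{ba}\ell}$-algebra containing $\mathbb R[B]$, every element a join of elements of $\mathbb R[B]$). *)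

theory Defs
  imports Main "HOL-Library.Lattice_Algebras"
begin

definition is_join :: "'a::order set \<Rightarrow> 'a \<Rightarrow> bool" where
  "is_join S f \<longleftrightarrow> (\<forall>s\<in>S. s \<le> f) \<and> (\<forall>u. (\<forall>s\<in>S. s \<le> u) \<longrightarrow> f \<le> u)"

definition bal_algebra :: "('a::{comm_ring_1, real_algebra_1, lattice}) itself \<Rightarrow> bool" where
  "bal_algebra _ \<longleftrightarrow>
     (\<forall>a b c :: 'a. a \<le> b \<longrightarrow> a + c \<le> b + c) \<and>
     (\<forall>a b :: 'a. 0 \<le> a \<and> 0 \<le> b \<longrightarrow> 0 \<le> a * b) \<and>
     (\<forall>(r::real) (a::'a). 0 \<le> r \<and> 0 \<le> a \<longrightarrow> 0 \<le> r *\<^sub>R a) \<and>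
     (\<forall>a :: 'a. \<exists>n::nat. n \<ge> 1 \<and> a \<le> of_nat n) \<and>
     (\<forall>a b :: 'a. (\<forall>n::nat. n \<ge> 1 \<longrightarrow> of_nat n * a \<le> b) \<longrightarrow> a \<le> 0)"

definition dedekind_complete :: "('a::order) itself \<Rightarrow> bool" where
  "dedekind_complete _ \<longleftrightarrow>
     (\<forall>S :: 'a set. S \<noteq> {} \<and> (\<exists>u. \<forall>s\<in>S. s \<le> u) \<longrightarrow> (\<exists>f. is_join S f))"

definition labs :: "'a::{lattice, uminus} \<Rightarrow> 'a" where
  "labs a = sup a (- a)"

definition l_ideal :: "('a::{comm_ring_1, lattice}) set \<Rightarrow> bool" where
  "l_ideal I \<longleftrightarrow> 0 \<in> I \<and> (\<forall>a\<in>I. \<forall>b\<in>I. a + b \<in> I) \<and> (\<forall>a\<in>I. - a \<in> I) \<and>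
     (\<forall>a. \<forall>b\<in>I. a * b \<in> I) \<and> (\<forall>a b. labs a \<le> labs b \<and> b \<in> I \<longrightarrow> a \<in> I)"

text \<open>Archimedean l-ideal: A/I archimedean.  In A/I, [a] <= [b] iff (a - b)^+ \<in> I,
  so "n[a] <= [b] for all n >= 1 implies [a] <= 0" unfolds to the following.\<close>
definition arch_ideal :: "('a::{comm_ring_1, lattice}) set \<Rightarrow> bool" where
  "arch_ideal I \<longleftrightarrow> l_ideal I \<and>
     (\<forall>a b. (\<forall>n::nat. n \<ge> 1 \<longrightarrow> sup (of_nat n * a - b) 0 \<in> I) \<longrightarrow> sup a 0 \<in> I)"

definition Arch :: "('a::{comm_ring_1, lattice}) set set" where
  "Arch = {I. arch_ideal I}"

definition arch_join :: "('a::{comm_ring_1, lattice}) set \<Rightarrow> 'a set \<Rightarrow> 'a set" where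
  "arch_join I J = \<Inter> {K. arch_ideal K \<and> I \<union> J \<subseteq> K}"

inductive_set bool_gen :: "'b::boolean_algebra set \<Rightarrow> 'b set" for G where
  base: "g \<in> G \<Longrightarrow> g \<in> bool_gen G"
| bot: "bot \<in> bool_gen G"
| top: "top \<in> bool_gen G"
| inf: "a \<in> bool_gen G \<Longrightarrow> b \<in> bool_gen G \<Longrightarrow> inf a b \<in> bool_gen G"
| sup: "a \<in> bool_gen G \<Longrightarrow> b \<in> bool_gen G \<Longrightarrow> sup a b \<in> bool_gen G"
| compl: "a \<in> bool_gen G \<Longrightarrow> - a \<in> bool_gen G"

text \<open>emb : Arch(A) -> B exhibits B as the free boolean extension of the bounded
  distributive lattice Arch(A): a bounded lattice embedding whose image generates B.\<close>
definition free_bool_ext :: "('a::{comm_ring_1, lattice} set \<Rightarrow> 'b::boolean_algebra) \<Rightarrow> bool" where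
  "free_bool_ext emb \<longleftrightarrow>
     inj_on emb Arch \<and> emb {0} = bot \<and> emb UNIV = top \<and>
     (\<forall>I\<in>Arch. \<forall>J\<in>Arch. emb (I \<inter> J) = inf (emb I) (emb J)) \<and>
     (\<forall>I\<in>Arch. \<forall>J\<in>Arch. emb (arch_join I J) = sup (emb I) (emb J)) \<and>
     bool_gen (emb ` Arch) = UNIV"

text \<open>The image of R[B] in D: real linear combinations of the x_e.\<close>
definition RB_image :: "('b \<Rightarrow> 'd::real_vector) \<Rightarrow> 'd set" where
  "RB_image x = {(\<Sum>e\<in>F. c e *\<^sub>R x e) | F c. finite F}"

text \<open>x : B -> D exhibits D as D(R[B]): D is a Dedekind complete ba-l-algebra, x satisfies
  the defining relations of R[B], the induced map R[B] -> D is injective, and every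
  element of D is a join of elements of R[B].\<close>
definition dedekind_completion_RB ::
  "('b::boolean_algebra \<Rightarrow> 'd::{comm_ring_1, real_algebra_1, lattice}) \<Rightarrow> bool" where
  "dedekind_completion_RB x \<longleftrightarrow>
     bal_algebra TYPE('d) \<and> dedekind_complete TYPE('d) \<and>
     (\<forall>e f. x (inf e f) = x e * x f) \<and>
     (\<forall>e f. x (sup e f) = x e + x f - x e * x f) \<and>
     (\<forall>e. x (- e) = 1 - x e) \<and>
     x bot = 0 \<and>
     (\<forall>e. x e = 0 \<longrightarrow> e = bot) \<and>
     (\<forall>f. \<exists>S \<subseteq> RB_image x. is_join S f)"

end

theory Submission
  imports Defs
begin

locale lg =
  fixes T :: "'g::{ab_group_add,lattice} itself"
  assumes mono: "\<And>a b c::'g. a \<le> b \<Longrightarrow> a + c \<le> b + c"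
begin
sublocale L: lattice_ab_group_add_abs "labs :: 'g \<Rightarrow> 'g" "(+)" 0 "(-)" uminus "(\<le>)" "(<)" inf sup
  apply unfold_locales
  apply (simp_all add: labs_def algebra_simps less_le_not_le)
  using mono by (simp add: add.commute)

lemma pn: "sup a 0 - sup (- a) 0 = (a::'g)"
proof -
  have 1: "a + 0 = sup a 0 + inf a 0" by (rule L.add_eq_inf_sup)
  have 2: "inf a 0 = - sup (-a) 0" using L.inf_eq_neg_sup[of a 0] by (simp only: minus_zero)
  show ?thesis using 1 unfolding 2 by (simp only: add_0_right diff_conv_add_uminus)
qed

lemma disj_pn: "inf (sup a 0) (sup (- a) 0) = (0::'g)"
proof -
  define P where "P = sup a 0"
  have N: "sup (- a) 0 = P - a"
  proof -
    have "sup a 0 - sup (- a) 0 = a" by (rule pn)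
    then have "sup a 0 = a + sup (- a) 0" by (metis diff_add_cancel)
    then show ?thesis unfolding P_def by simp
  qed
  have e1: "P + inf 0 (-a) = inf P (P - a)" using L.add_inf_distrib_left[of P 0 "-a"]
    by (simp only: add_0_right diff_conv_add_uminus)
  have "- sup 0 a = inf (- 0) (- a)" by (rule L.neg_sup_eq_inf)
  then have e2: "inf 0 (-a) = - P" unfolding P_def by (simp only: sup_commute minus_zero)
  have "inf P (P - a) = 0" using e1 unfolding e2 by (simp only: add.right_inverse)
  then show ?thesis unfolding N P_def[symmetric] .
qed

lemma labs_pn: "labs (a::'g) = sup a 0 + sup (- a) 0"
proof -
  have 1: "sup a 0 + sup (- a) 0 = sup (a + sup (- a) 0) (0 + sup (- a) 0)"
    by (rule L.add_sup_distrib_right)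
  have 2: "a + sup (- a) 0 = sup (a + - a) (a + 0)" by (rule L.add_sup_distrib_left)
  have 3: "sup a 0 + sup (- a) 0 = sup (sup a (-a)) 0"
    using 1 unfolding 2 by (simp only: add_0_right add_0_left add.right_inverse
        sup_commute sup_left_commute sup_assoc sup.left_idem sup_idem)
  have 4: "0 \<le> sup a (-a)" using L.abs_ge_zero[of a] by (simp only: labs_def)
  show ?thesis unfolding 3 labs_def using 4 by (rule sup_absorb1[symmetric])
qed

lemma labs_ge0: "0 \<le> labs (a::'g)" by (rule L.abs_ge_zero)
lemma labs_id: "0 \<le> (a::'g) \<Longrightarrow> labs a = a" by (rule L.abs_of_nonneg)
lemma labs_minus: "labs (- a::'g) = labs a" by (rule L.abs_minus_cancel)
lemma labs_zero: "labs (a::'g) = 0 \<longleftrightarrow> a = 0" by (rule L.abs_eq_0)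

lemma disj_add:
  assumes "0 \<le> p" "0 \<le> (q::'g)" "0 \<le> c" "inf p c = 0" "inf q c = 0"
  shows "inf (p + q) c = 0"
proof -
  have "inf (p + q) c \<le> inf (p + q) (c + q)"
  proof (rule inf_mono)
    show "c \<le> c + q" using assms(2) by (simp add: L.add_increasing2)
  qed simp
  also have "\<dots> = inf p c + q" by (simp add: L.add_inf_distrib_right)
  finally have 1: "inf (p + q) c \<le> q" using assms by simp
  have "inf (p + q) c \<le> inf q c" using 1 by (rule le_infI) (rule inf_le2)
  then have 2: "inf (p + q) c \<le> 0" unfolding assms(5) .
  have 3: "0 \<le> inf (p + q) c" using assms by (intro le_infI L.add_nonneg_nonneg)
  show ?thesis using 2 3 by (rule antisym)
qed

lemma le_diff_iff: "0 \<le> b - a \<longleftrightarrow> (a::'g) \<le> b" by (rule L.diff_ge_0_iff_ge)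

end

definition polar :: "('g::{ab_group_add,lattice}) set \<Rightarrow> 'g set" where
  "polar S = {z. \<forall>y\<in>S. inf (labs z) (labs y) = 0}"

locale bal =
  fixes T :: "'a::{comm_ring_1,real_algebra_1,lattice} itself"
  assumes bal: "bal_algebra T"
begin

lemma mono_add: "a \<le> b \<Longrightarrow> a + c \<le> b + (c::'a)"
  using bal unfolding bal_algebra_def by blast

sublocale lg T by unfold_locales (rule mono_add)

lemma mult_pos: "0 \<le> a \<Longrightarrow> 0 \<le> b \<Longrightarrow> 0 \<le> a * (b::'a)"
  using bal unfolding bal_algebra_def by blast

lemma scale_pos: "0 \<le> r \<Longrightarrow> 0 \<le> a \<Longrightarrow> 0 \<le> r *\<^sub>R (a::'a)"
  using bal unfolding bal_algebra_def by blast

lemma bounded: "\<exists>n::nat. n \<ge> 1 \<and> (a::'a) \<le> of_nat n"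
  using bal unfolding bal_algebra_def by blast

lemma archim: "(\<And>n::nat. n \<ge> 1 \<Longrightarrow> of_nat n * a \<le> b) \<Longrightarrow> (a::'a) \<le> 0"
  using bal unfolding bal_algebra_def by blast

lemma of_nat_scaleR: "(of_nat n :: 'a) = real n *\<^sub>R 1"
  by (simp only: scaleR_conv_of_real mult_1_right of_real_of_nat_eq)

lemma one_ge0: "0 \<le> (1::'a)"
proof -
  obtain n :: nat where "- 1 \<le> (of_nat n :: 'a)" using bounded by blast
  then have "0 \<le> (of_nat n :: 'a) - (- 1)" using le_diff_iff by blast
  moreover have "(of_nat n :: 'a) - (- 1) = of_nat (Suc n)" by simp
  ultimately have h: "0 \<le> real (Suc n) *\<^sub>R (1::'a)"
    unfolding of_nat_scaleR by simp
  have "0 \<le> (1 / real (Suc n)) *\<^sub>R (real (Suc n) *\<^sub>R (1::'a))"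
    by (rule scale_pos[OF _ h]) simp
  moreover have "(1 / real (Suc n)) * real (Suc n) = 1" by simp
  ultimately show ?thesis by (simp only: scaleR_scaleR scaleR_one)
qed

lemma of_nat_ge0: "0 \<le> (of_nat n :: 'a)"
  unfolding of_nat_scaleR using one_ge0 by (intro scale_pos) simp_all

lemma of_nat_mono': "m \<le> n \<Longrightarrow> (of_nat m :: 'a) \<le> of_nat n"
proof -
  assume "m \<le> n"
  then have "(of_nat n :: 'a) - of_nat m = of_nat (n - m)" by (simp add: of_nat_diff)
  then show ?thesis using of_nat_ge0[of "n - m"] le_diff_iff by metis
qed

lemma mult_right_mono': "a \<le> b \<Longrightarrow> 0 \<le> c \<Longrightarrow> a * c \<le> b * (c::'a)"
proof -
  assume "a \<le> b" "0 \<le> c"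
  then have "0 \<le> (b - a) * c" using le_diff_iff mult_pos by blast
  then show ?thesis using le_diff_iff by (simp add: left_diff_distrib)
qed

lemma mult_left_mono': "a \<le> b \<Longrightarrow> 0 \<le> c \<Longrightarrow> c * a \<le> c * (b::'a)"
  using mult_right_mono' by (simp add: mult.commute)

lemma scale_mono: "a \<le> b \<Longrightarrow> 0 \<le> r \<Longrightarrow> r *\<^sub>R a \<le> r *\<^sub>R (b::'a)"
proof -
  assume "a \<le> b" "0 \<le> r"
  then have "0 \<le> r *\<^sub>R (b - a)" using le_diff_iff scale_pos by blast
  then show ?thesis using le_diff_iff by (simp add: scaleR_diff_right)
qed

lemma disj_nat:
  assumes "0 \<le> p" "0 \<le> c" "inf p c = 0"
  shows "inf (of_nat n * p) (c::'a) = 0"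
proof (induction n)
  case 0
  show ?case using assms(2) by (simp add: inf_absorb1)
next
  case (Suc n)
  have "of_nat (Suc n) * p = p + of_nat n * p" by (simp add: algebra_simps)
  moreover have "0 \<le> of_nat n * p" using assms(1) of_nat_ge0 mult_pos by blast
  ultimately show ?case using disj_add[OF assms(1) _ assms(2) assms(3) Suc.IH] by simp
qed

lemma fring:
  assumes "0 \<le> p" "0 \<le> q" "inf p q = 0" "0 \<le> c"
  shows "inf (c * p) (q::'a) = 0"
proof -
  obtain n :: nat where n: "c \<le> of_nat n" using bounded by blast
  have 1: "c * p \<le> of_nat n * p" using n assms(1) by (rule mult_right_mono')
  have 2: "0 \<le> c * p" using assms mult_pos by blast
  have "inf (c * p) q \<le> inf (of_nat n * p) q" using 1 by (rule inf_mono) simp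
  then have "inf (c * p) q \<le> 0" unfolding disj_nat[OF assms(1) assms(2) assms(3)] .
  moreover have "0 \<le> inf (c * p) q" using 2 assms(2) by (rule le_infI)
  ultimately show ?thesis by (rule antisym)
qed

lemma sq_nonneg': "0 \<le> a * (a::'a)"
proof -
  define P where "P = sup a 0"
  define N where "N = sup (- a) 0"
  have P0: "0 \<le> P" and N0: "0 \<le> N" unfolding P_def N_def by simp_all
  have aPN: "a = P - N" unfolding P_def N_def by (rule pn[symmetric])
  have d: "inf P N = 0" unfolding P_def N_def by (rule disj_pn)
  have d1: "inf (N * P) N = 0" using P0 N0 d N0 by (rule fring)
  have d2: "inf N (N * P) = 0" using d1 by (simp add: inf_commute)
  have NP0: "0 \<le> N * P" using N0 P0 mult_pos by blast
  have "inf (P * (N * P)) (N * P) = 0"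
  proof -
    have "inf (P * N) (N * P) = 0" using N0 NP0 d2 P0 by (rule fring)
    then show ?thesis by (simp add: mult.commute)
  qed
  have z: "P * N = 0"
  proof -
    have "inf (P * N) (N * P) = 0" using N0 NP0 d2 P0 by (rule fring)
    then show ?thesis by (simp add: mult.commute)
  qed
  have "a * a = P * P + N * N - 2 * (P * N)" unfolding aPN by (simp add: algebra_simps)
  also have "\<dots> = P * P + N * N" using z by simp
  finally show ?thesis using P0 N0 mult_pos L.add_nonneg_nonneg by metis
qed

lemma labs_mult_le: "\<exists>n::nat. labs (a * z) \<le> of_nat n * labs (z::'a)"
proof -
  obtain n1 :: nat where n1: "a \<le> of_nat n1" using bounded by blast
  obtain n2 :: nat where n2: "- a \<le> of_nat n2" using bounded by blast
  define n where "n = max n1 n2"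
  have an: "a \<le> of_nat n" using n1 of_nat_mono'[of n1 n] unfolding n_def by auto
  have man: "- a \<le> of_nat n" using n2 of_nat_mono'[of n2 n] unfolding n_def by auto
  define P where "P = sup z 0"
  define N where "N = sup (- z) 0"
  have P0: "0 \<le> P" and N0: "0 \<le> N" unfolding P_def N_def by simp_all
  have zPN: "z = P - N" unfolding P_def N_def by (rule pn[symmetric])
  have lz: "labs z = P + N" unfolding P_def N_def by (rule labs_pn)
  have a1: "a * P \<le> of_nat n * P" using an P0 by (rule mult_right_mono')
  have a2: "(- a) * N \<le> of_nat n * N" using man N0 by (rule mult_right_mono')
  have a3: "(- a) * P \<le> of_nat n * P" using man P0 by (rule mult_right_mono')
  have a4: "a * N \<le> of_nat n * N" using an N0 by (rule mult_right_mono')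
  have "a * z \<le> of_nat n * labs z"
  proof -
    have "a * z = a * P + (- a) * N" unfolding zPN by (simp add: algebra_simps)
    also have "\<dots> \<le> of_nat n * P + of_nat n * N" using a1 a2 by (rule L.add_mono)
    finally show ?thesis unfolding lz by (simp add: distrib_left)
  qed
  moreover have "- (a * z) \<le> of_nat n * labs z"
  proof -
    have "- (a * z) = (- a) * P + a * N" unfolding zPN by (simp add: algebra_simps)
    also have "\<dots> \<le> of_nat n * P + of_nat n * N" using a3 a4 by (rule L.add_mono)
    finally show ?thesis unfolding lz by (simp add: distrib_left)
  qed
  ultimately show ?thesis unfolding labs_def by (intro exI sup_least)
qed


lemma scale_sup: "0 < r \<Longrightarrow> r *\<^sub>R sup a b = sup (r *\<^sub>R a) (r *\<^sub>R (b::'a))"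
proof -
  assume r: "0 < r"
  have 1: "sup (r *\<^sub>R a) (r *\<^sub>R b) \<le> r *\<^sub>R sup a b"
    using r by (intro sup_least scale_mono) simp_all
  have "inverse r *\<^sub>R sup (r *\<^sub>R a) (r *\<^sub>R b) \<ge> sup a b"
  proof (rule sup_least)
    have "inverse r *\<^sub>R (r *\<^sub>R a) \<le> inverse r *\<^sub>R sup (r *\<^sub>R a) (r *\<^sub>R b)"
      using r by (intro scale_mono) simp_all
    then show "a \<le> inverse r *\<^sub>R sup (r *\<^sub>R a) (r *\<^sub>R b)" using r by simp
    have "inverse r *\<^sub>R (r *\<^sub>R b) \<le> inverse r *\<^sub>R sup (r *\<^sub>R a) (r *\<^sub>R b)"
      using r by (intro scale_mono) simp_all
    then show "b \<le> inverse r *\<^sub>R sup (r *\<^sub>R a) (r *\<^sub>R b)" using r by simp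
  qed
  then have "r *\<^sub>R sup a b \<le> r *\<^sub>R (inverse r *\<^sub>R sup (r *\<^sub>R a) (r *\<^sub>R b))"
    using r by (intro scale_mono) simp_all
  then have 2: "r *\<^sub>R sup a b \<le> sup (r *\<^sub>R a) (r *\<^sub>R b)" using r by simp
  show ?thesis using 1 2 by (rule antisym[rotated])
qed

lemma of_nat_mult_scale: "(of_nat n :: 'a) * a = real n *\<^sub>R a"
  by (simp add: of_nat_scaleR)

lemma nat_sup0: "of_nat n * sup a 0 = sup (of_nat n * a) (0::'a)"
proof (cases "n = 0")
  case True then show ?thesis by simp
next
  case False
  then have "0 < real n" by simp
  then show ?thesis unfolding of_nat_mult_scale by (simp add: scale_sup)
qed

lemma squeeze0: "0 \<le> x \<Longrightarrow> x \<le> y \<Longrightarrow> 0 \<le> p \<Longrightarrow> inf y p = 0 \<Longrightarrow> inf x (p::'a) = 0"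
proof -
  assume "0 \<le> x" "x \<le> y" "0 \<le> p" "inf y p = 0"
  have 1: "inf x p \<le> inf y p" "0 \<le> inf x p"
    using \<open>x \<le> y\<close> \<open>0 \<le> x\<close> \<open>0 \<le> p\<close> by (simp_all add: le_infI2 inf.coboundedI1)
  have "inf x p \<le> 0" using 1(1) unfolding \<open>inf y p = 0\<close> .
  then show ?thesis using 1(2) by (rule antisym)
qed

lemma polar_arch: "arch_ideal (polar (S::'a set))"
  unfolding arch_ideal_def l_ideal_def
proof (intro conjI allI ballI impI)
  show "0 \<in> polar S" unfolding polar_def
    using labs_ge0 by (simp add: labs_def inf_absorb1)
next
  fix a b assume a: "a \<in> polar S" and b: "b \<in> polar S"
  show "a + b \<in> polar S" unfolding polar_def
  proof (intro CollectI ballI)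
    fix y assume y: "y \<in> S"
    have "inf (labs a + labs b) (labs y) = 0"
      using a b y unfolding polar_def by (intro disj_add labs_ge0) auto
    then show "inf (labs (a + b)) (labs y) = 0"
      by (rule squeeze0[OF labs_ge0 L.abs_triangle_ineq labs_ge0])
  qed
next
  fix a assume "a \<in> polar S"
  then show "- a \<in> polar S" unfolding polar_def by (simp add: labs_minus)
next
  fix a b assume b: "b \<in> polar S"
  obtain n where n: "labs (a * b) \<le> of_nat n * labs b" using labs_mult_le by blast
  show "a * b \<in> polar S" unfolding polar_def
  proof (intro CollectI ballI)
    fix y assume y: "y \<in> S"
    have "inf (of_nat n * labs b) (labs y) = 0"
      using b y unfolding polar_def by (intro disj_nat labs_ge0) auto
    then show "inf (labs (a * b)) (labs y) = 0"
      by (rule squeeze0[OF labs_ge0 n labs_ge0])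
  qed
next
  fix a b assume "labs a \<le> labs b \<and> b \<in> polar S"
  then show "a \<in> polar S" unfolding polar_def
    by (auto intro: squeeze0[OF labs_ge0 _ labs_ge0])
next
  fix a b assume H: "\<forall>n::nat. n \<ge> 1 \<longrightarrow> sup (of_nat n * a - b) 0 \<in> polar S"
  show "sup a 0 \<in> polar S" unfolding polar_def
  proof (intro CollectI ballI)
    fix y assume y: "y \<in> S"
    define p where "p = labs y"
    have p0: "0 \<le> p" unfolding p_def by (rule labs_ge0)
    define b' where "b' = sup b 0"
    define w where "w = inf (sup a 0) p"
    have w0: "0 \<le> w" unfolding w_def using p0 by simp
    have "of_nat n * w \<le> b'" if n: "n \<ge> 1" for n :: nat
    proof -
      define X where "X = sup (of_nat n * w - b') 0"
      define Y where "Y = sup (of_nat n * a - b) 0"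
      have Yp: "inf Y p = 0" using H n y unfolding Y_def p_def polar_def
        by (simp add: labs_id)
      have X0: "0 \<le> X" unfolding X_def by simp
      have b'0: "0 \<le> b'" unfolding b'_def by simp
      have "of_nat n * w \<le> of_nat n * sup a 0"
        unfolding w_def by (intro mult_left_mono' of_nat_ge0) simp
      then have "of_nat n * w - b' \<le> sup (of_nat n * a) 0 - b'"
        unfolding nat_sup0 by (simp add: L.diff_right_mono)
      also have "\<dots> = sup (of_nat n * a - b') (0 - b')"
        by (simp only: diff_conv_add_uminus L.add_sup_distrib_right)
      finally have "X \<le> sup (sup (of_nat n * a - b') (0 - b')) 0"
        unfolding X_def by (rule sup_mono) simp
      also have "\<dots> = sup (of_nat n * a - b') 0"
        using b'0 by (simp add: sup_assoc sup_absorb2)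
      also have "\<dots> \<le> Y" unfolding Y_def b'_def
        by (intro sup_mono L.diff_left_mono) simp_all
      finally have XY: "X \<le> Y" .
      have Xp: "inf X p = 0" by (rule squeeze0[OF X0 XY p0 Yp])
      have "of_nat n * w - b' \<le> of_nat n * w"
        using b'0 by (simp only: L.diff_le_eq L.le_add_same_cancel1)
      then have "X \<le> sup (of_nat n * w) 0" unfolding X_def
        by (intro sup_mono) simp_all
      also have "\<dots> = of_nat n * w" using w0 of_nat_ge0 mult_pos by (simp add: sup_absorb1)
      also have "\<dots> \<le> of_nat n * p" unfolding w_def
        by (intro mult_left_mono' of_nat_ge0) simp
      finally have Xnp: "X \<le> of_nat n * p" .
      have "inf (of_nat n * p) X = 0" using p0 X0 Xp[unfolded inf_commute[of X]] by (rule disj_nat)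
      then have "X = 0" using Xnp by (simp add: inf_commute inf_absorb1)
      then show ?thesis unfolding X_def using le_diff_iff
        by (metis sup.absorb_iff2 sup_commute L.diff_le_0_iff_le)
    qed
    then have "w \<le> 0" by (rule archim)
    then have "w = 0" using w0 by simp
    moreover have "labs (sup a 0) = sup a 0" by (simp add: labs_id)
    ultimately show "inf (labs (sup a 0)) (labs y) = 0" unfolding w_def p_def by simp
  qed
qed


lemma arch_UNIV: "arch_ideal (UNIV::'a set)"
  unfolding arch_ideal_def l_ideal_def by simp

lemma sup0_le: "sup c 0 = 0 \<Longrightarrow> c \<le> (0::'a)"
  by (metis sup.cobounded1)

lemma arch_zero: "arch_ideal {0::'a}"
  unfolding arch_ideal_def l_ideal_def
proof (intro conjI allI ballI impI)
  fix a b :: 'a assume H: "labs a \<le> labs b \<and> b \<in> {0}"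
  have l0: "labs (0::'a) = 0" by (simp add: labs_zero)
  from H have hb: "b = 0" by blast
  from H have "labs a \<le> labs b" by blast
  then have "labs a \<le> 0" unfolding hb l0 .
  then have "labs a = 0" using labs_ge0[of a] by (rule antisym)
  then show "a \<in> {0}" by (simp add: labs_zero)
next
  fix a b :: 'a assume H: "\<forall>n::nat. n \<ge> 1 \<longrightarrow> sup (of_nat n * a - b) 0 \<in> {0}"
  have "of_nat n * a \<le> b" if "n \<ge> 1" for n :: nat
  proof -
    have "sup (of_nat n * a - b) 0 = 0" using H that by blast
    then have "of_nat n * a - b \<le> 0" by (rule sup0_le)
    then show ?thesis by (simp only: L.diff_le_0_iff_le)
  qed
  then have "a \<le> 0" by (rule archim)
  then show "sup a 0 \<in> {0}" by (simp add: sup_absorb2)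
qed simp_all

lemma arch_Inter: "F \<noteq> {} \<Longrightarrow> (\<And>K. K \<in> F \<Longrightarrow> arch_ideal K) \<Longrightarrow> arch_ideal (\<Inter>F :: 'a set)"
  unfolding arch_ideal_def l_ideal_def by blast

lemma arch_Int: "arch_ideal K \<Longrightarrow> arch_ideal L \<Longrightarrow> arch_ideal (K \<inter> L :: 'a set)"
  using arch_Inter[of "{K, L}"] by auto

lemma arch_join_arch: "arch_ideal (arch_join J (K::'a set))"
  unfolding arch_join_def using arch_UNIV by (intro arch_Inter) auto

lemma arch_join_UNIV_mono: "K \<subseteq> I \<Longrightarrow> arch_join J K = UNIV \<Longrightarrow> arch_join J I = (UNIV::'a set)"
  unfolding arch_join_def by blast

lemma arch_join_UNIV_left: "arch_join UNIV I = (UNIV::'a set)"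
  unfolding arch_join_def by blast

lemma arch_join_ub: "J \<subseteq> arch_join J (K::'a set)" "K \<subseteq> arch_join J K"
  unfolding arch_join_def by blast+

lemma l_ideal_one: "l_ideal M \<Longrightarrow> (1::'a) \<in> M \<Longrightarrow> M = UNIV"
  unfolding l_ideal_def by (metis UNIV_eq_I mult_1_right)

lemma frame_sep:
  assumes K: "arch_ideal K" and L: "arch_ideal L" and KL: "\<not> K \<subseteq> (L::'a set)"
  shows "\<exists>J J'. arch_ideal J \<and> arch_ideal J' \<and> J \<inter> J' = {0} \<and> J' \<subseteq> K \<and> \<not> J' \<subseteq> L
     \<and> arch_join J K = UNIV"
proof -
  obtain a where aK: "a \<in> K" and aL: "a \<notin> L" using KL by blast
  define a0 where "a0 = labs a"
  have a00: "0 \<le> a0" unfolding a0_def by (rule labs_ge0)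
  have la0: "labs a0 = a0" using a00 by (rule labs_id)
  have "labs a0 \<le> labs a" using la0 unfolding a0_def by simp
  then have a0K: "a0 \<in> K" using K aK unfolding arch_ideal_def l_ideal_def by blast
  have a0L: "a0 \<notin> L"
  proof
    assume "a0 \<in> L"
    moreover have "labs a \<le> labs a0" using la0 unfolding a0_def by simp
    ultimately have "a \<in> L" using L unfolding arch_ideal_def l_ideal_def by blast
    then show False using aL by simp
  qed
  obtain n :: nat where n1: "n \<ge> 1" and pL: "sup (of_nat n * a0 - 1) 0 \<notin> L"
  proof -
    have "\<exists>n::nat. n \<ge> 1 \<and> sup (of_nat n * a0 - 1) 0 \<notin> L"
    proof (rule ccontr)
      assume "\<not> ?thesis"
      then have "sup a0 0 \<in> L" using L unfolding arch_ideal_def by blast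
      then show False using a0L a00 by (simp add: sup_absorb1)
    qed
    then show ?thesis using that by blast
  qed
  define p where "p = sup (of_nat n * a0 - 1) 0"
  define q where "q = sup (- (of_nat n * a0 - 1)) 0"
  have p0: "0 \<le> p" and q0: "0 \<le> q" unfolding p_def q_def by simp_all
  have pq: "inf p q = 0" unfolding p_def q_def by (rule disj_pn)
  define J where "J = polar {p}"
  define J' where "J' = K \<inter> polar (polar {p})"
  have naK: "of_nat n * a0 \<in> K" using K a0K unfolding arch_ideal_def l_ideal_def by blast
  have na0: "0 \<le> of_nat n * a0" using of_nat_ge0 a00 by (rule mult_pos)
  have pK: "p \<in> K"
  proof -
    have "of_nat n * a0 - 1 \<le> of_nat n * a0"
      using one_ge0 by (simp only: L.diff_le_eq L.le_add_same_cancel1)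
    then have "p \<le> of_nat n * a0" unfolding p_def using na0 by simp
    then have "labs p \<le> labs (of_nat n * a0)" using p0 na0 by (simp add: labs_id)
    then show ?thesis using K naK unfolding arch_ideal_def l_ideal_def by blast
  qed
  have pJ': "p \<in> J'" unfolding J'_def polar_def using pK
    by (auto simp: inf_commute)
  have "J \<inter> J' = {0}"
  proof
    show "J \<inter> J' \<subseteq> {0}"
    proof
      fix z assume "z \<in> J \<inter> J'"
      then have "inf (labs z) (labs z) = 0" unfolding J_def J'_def polar_def by blast
      then show "z \<in> {0}" by (simp add: labs_zero)
    qed
    show "{0} \<subseteq> J \<inter> J'"
      using polar_arch K unfolding J_def J'_def arch_ideal_def l_ideal_def by blast
  qed
  moreover have "arch_ideal J" unfolding J_def by (rule polar_arch)
  moreover have "arch_ideal J'" unfolding J'_def using K polar_arch by (rule arch_Int)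
  moreover have "J' \<subseteq> K" unfolding J'_def by blast
  moreover have "\<not> J' \<subseteq> L" using pJ' pL unfolding p_def by blast
  moreover have "arch_join J K = UNIV"
  proof -
    have "M = UNIV" if M: "arch_ideal M" "J \<union> K \<subseteq> M" for M
    proof -
      have qJ: "q \<in> J" unfolding J_def polar_def using pq p0 q0
        by (simp add: labs_id inf_commute)
      have s: "of_nat n * a0 + q \<in> M" using M qJ naK unfolding arch_ideal_def l_ideal_def by blast
      have "of_nat n * a0 + q = sup (of_nat n * a0 + - (of_nat n * a0 - 1)) (of_nat n * a0 + 0)"
        unfolding q_def by (rule L.add_sup_distrib_left)
      then have "of_nat n * a0 + q = sup 1 (of_nat n * a0)" by simp
      then have "1 \<le> of_nat n * a0 + q" by simp
      then have "labs 1 \<le> labs (of_nat n * a0 + q)"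
        using one_ge0 by (simp add: labs_id order_trans[OF one_ge0])
      then have "1 \<in> M" using M s unfolding arch_ideal_def l_ideal_def by blast
      then show ?thesis using M l_ideal_one unfolding arch_ideal_def by blast
    qed
    then show ?thesis unfolding arch_join_def by blast
  qed
  ultimately show ?thesis by blast
qed

end


inductive_set NF :: "('a::{comm_ring_1,lattice} set \<Rightarrow> 'b::boolean_algebra) \<Rightarrow> 'b set" for emb where
  NF_bot: "bot \<in> NF emb"
| NF_term: "K \<in> Arch \<Longrightarrow> L \<in> Arch \<Longrightarrow> inf (emb K) (- emb L) \<in> NF emb"
| NF_sup: "a \<in> NF emb \<Longrightarrow> b \<in> NF emb \<Longrightarrow> sup a b \<in> NF emb"

locale setting = A: bal TA + D: bal TD
  for TA :: "'a::{comm_ring_1,real_algebra_1,lattice} itself"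
  and TD :: "'d::{comm_ring_1,real_algebra_1,lattice} itself" +
  fixes emb :: "'a set \<Rightarrow> 'b::boolean_algebra" and x :: "'b \<Rightarrow> 'd"
  assumes fbe: "free_bool_ext emb" and dc: "dedekind_completion_RB x"
begin

lemma x_inf: "x (inf e f) = x e * x f" using dc unfolding dedekind_completion_RB_def by blast
lemma x_sup: "x (sup e f) = x e + x f - x e * x f" using dc unfolding dedekind_completion_RB_def by blast
lemma x_compl: "x (- e) = 1 - x e" using dc unfolding dedekind_completion_RB_def by blast
lemma x_bot: "x bot = 0" using dc unfolding dedekind_completion_RB_def by blast
lemma x_nz: "x e = 0 \<Longrightarrow> e = bot" using dc unfolding dedekind_completion_RB_def by blast
lemma x_join: "\<exists>S \<subseteq> RB_image x. is_join S f" using dc unfolding dedekind_completion_RB_def by blast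

lemma x_top: "x top = 1" using x_compl[of bot] x_bot by simp
lemma x_idem: "x e * x e = x e" using x_inf[of e e] by simp
lemma x_ge0: "0 \<le> x e" using D.sq_nonneg'[of "x e"] x_idem by simp
lemma x_disj: "inf e f = bot \<Longrightarrow> x e * x f = 0" using x_inf x_bot by metis
lemma x_mono: "e \<le> f \<Longrightarrow> x e \<le> x f"
proof -
  assume "e \<le> f"
  then have "inf f e = e" by (simp add: inf_absorb2)
  then have "x f - x e = x (inf f (- e))" using x_inf[of f e] by (simp add: x_inf x_compl algebra_simps)
  then show ?thesis using x_ge0 D.le_diff_iff by metis
qed
lemma x_le1: "x e \<le> 1" using x_mono[of e top] x_top by simp
lemma x_split: "y = y * x e + y * x (- e)" by (simp add: x_compl algebra_simps)
lemma x_split2: "x h = x (inf h e) + x (inf h (- e))"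
  by (simp add: x_inf x_compl algebra_simps)
lemma mult_x_le: "0 \<le> w \<Longrightarrow> w * x e \<le> w"
proof -
  assume "0 \<le> w"
  then have "0 \<le> w * x (- e)" using x_ge0 D.mult_pos by blast
  then show ?thesis using x_split[of w e] D.le_diff_iff by (metis add_diff_cancel_left')
qed

lemma RB_gen:
  assumes "finite F"
  shows "\<forall>h t. (\<Sum>e\<in>F. c e *\<^sub>R x e) * x h \<le> t *\<^sub>R x h \<or>
     (\<exists>g. g \<le> h \<and> g \<noteq> bot \<and> (\<exists>d>t. (\<Sum>e\<in>F. c e *\<^sub>R x e) * x g = d *\<^sub>R x g))"
  using assms
proof (induction F rule: finite_induct)
  case empty
  show ?case
  proof (intro allI)
    fix h :: 'b and t :: real
    show "(\<Sum>e\<in>{}. c e *\<^sub>R x e) * x h \<le> t *\<^sub>R x h \<or>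
     (\<exists>g. g \<le> h \<and> g \<noteq> bot \<and> (\<exists>d>t. (\<Sum>e\<in>{}. c e *\<^sub>R x e) * x g = d *\<^sub>R x g))"
    proof (cases "0 \<le> t")
      case True
      then show ?thesis using D.scale_pos x_ge0 by simp
    next
      case False
      show ?thesis
      proof (cases "h = bot")
        case True then show ?thesis by (simp add: x_bot)
      next
        case hb: False
        then show ?thesis using False by (intro disjI2 exI[of _ h]) (auto intro!: exI[of _ 0])
      qed
    qed
  qed
next
  case (insert e F)
  define s where "s = (\<Sum>e\<in>F. c e *\<^sub>R x e)"
  have s': "(\<Sum>e\<in>insert e F. c e *\<^sub>R x e) = c e *\<^sub>R x e + s"
    unfolding s_def using insert by simp
  show ?case unfolding s'
  proof (intro allI)
    fix h :: 'b and t :: real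
    define h1 where "h1 = inf h e"
    define h2 where "h2 = inf h (- e)"
    have eh1: "x e * x h1 = x h1" unfolding h1_def x_inf[symmetric]
      by (simp add: inf_commute inf_left_commute)
    have eh2: "x e * x h2 = 0" unfolding h2_def
      by (intro x_disj) (simp add: inf_commute inf_left_commute)
    have hsplit: "x h = x h1 + x h2" unfolding h1_def h2_def by (rule x_split2)
    let ?P = "\<lambda>k. \<exists>g. g \<le> h \<and> g \<noteq> bot \<and> (\<exists>d>t. (c e *\<^sub>R x e + s) * x g = d *\<^sub>R x g)"
    have A: "(c e *\<^sub>R x e + s) * x h1 \<le> t *\<^sub>R x h1 \<or> ?P 0"
    proof -
      from insert.IH[rule_format, of h1 "t - c e"]
      show ?thesis
      proof
        assume H: "(\<Sum>e\<in>F. c e *\<^sub>R x e) * x h1 \<le> (t - c e) *\<^sub>R x h1"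
        have "(c e *\<^sub>R x e + s) * x h1 = c e *\<^sub>R x h1 + s * x h1"
          using eh1 by (simp add: distrib_right)
        also have "\<dots> \<le> c e *\<^sub>R x h1 + (t - c e) *\<^sub>R x h1"
          using H unfolding s_def by (intro D.L.add_left_mono)
        also have "\<dots> = t *\<^sub>R x h1" by (simp add: scaleR_left_diff_distrib)
        finally show ?thesis by blast
      next
        assume "\<exists>g. g \<le> h1 \<and> g \<noteq> bot \<and> (\<exists>d>t - c e. (\<Sum>e\<in>F. c e *\<^sub>R x e) * x g = d *\<^sub>R x g)"
        then obtain g d where g: "g \<le> h1" "g \<noteq> bot" "d > t - c e" "s * x g = d *\<^sub>R x g"
          unfolding s_def by blast
        have "x e * x g = x g" using g(1) unfolding h1_def x_inf[symmetric]
          by (metis inf.absorb_iff2 inf.boundedE inf_commute)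
        then have "(c e *\<^sub>R x e + s) * x g = (c e + d) *\<^sub>R x g"
          using g(4) by (simp add: distrib_right scaleR_left_distrib)
        moreover have "g \<le> h" using g(1) unfolding h1_def by simp
        ultimately show ?thesis using g by (intro disjI2 exI[of _ g]) (auto intro!: exI[of _ "c e + d"])
      qed
    qed
    have B: "(c e *\<^sub>R x e + s) * x h2 \<le> t *\<^sub>R x h2 \<or> ?P 0"
    proof -
      from insert.IH[rule_format, of h2 t]
      show ?thesis
      proof
        assume H: "(\<Sum>e\<in>F. c e *\<^sub>R x e) * x h2 \<le> t *\<^sub>R x h2"
        have "(c e *\<^sub>R x e + s) * x h2 = s * x h2"
          using eh2 by (simp add: distrib_right)
        then show ?thesis using H unfolding s_def by simp
      next
        assume "\<exists>g. g \<le> h2 \<and> g \<noteq> bot \<and> (\<exists>d>t. (\<Sum>e\<in>F. c e *\<^sub>R x e) * x g = d *\<^sub>R x g)"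
        then obtain g d where g: "g \<le> h2" "g \<noteq> bot" "d > t" "s * x g = d *\<^sub>R x g"
          unfolding s_def by blast
        have "inf e g = bot" using g(1) unfolding h2_def
          by (metis inf.absorb_iff2 inf.boundedE inf_compl_bot_right inf_commute inf_left_commute)
        then have "x e * x g = 0" by (rule x_disj)
        then have "(c e *\<^sub>R x e + s) * x g = d *\<^sub>R x g"
          using g(4) by (simp add: distrib_right)
        moreover have "g \<le> h" using g(1) unfolding h2_def by simp
        ultimately show ?thesis using g by (intro disjI2 exI[of _ g]) auto
      qed
    qed
    show "(c e *\<^sub>R x e + s) * x h \<le> t *\<^sub>R x h \<or> ?P 0"
    proof (cases "?P 0")
      case True then show ?thesis by blast
    next
      case False
      then have a: "(c e *\<^sub>R x e + s) * x h1 \<le> t *\<^sub>R x h1"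
        and b: "(c e *\<^sub>R x e + s) * x h2 \<le> t *\<^sub>R x h2" using A B by blast+
      have "(c e *\<^sub>R x e + s) * x h = (c e *\<^sub>R x e + s) * x h1 + (c e *\<^sub>R x e + s) * x h2"
        unfolding hsplit by (simp add: distrib_left)
      also have "\<dots> \<le> t *\<^sub>R x h1 + t *\<^sub>R x h2" using a b by (rule D.L.add_mono)
      also have "\<dots> = t *\<^sub>R x h" unfolding hsplit by (simp add: scaleR_right_distrib)
      finally show ?thesis by blast
    qed
  qed
qed

lemma RB_witness:
  assumes "s \<in> RB_image x" "\<not> s \<le> 0"
  shows "\<exists>g d. g \<noteq> bot \<and> d > 0 \<and> s * x g = d *\<^sub>R x g"
proof -
  obtain F c where F: "finite F" and s: "s = (\<Sum>e\<in>F. c e *\<^sub>R x e)"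
    using assms(1) unfolding RB_image_def by blast
  from RB_gen[OF F, of c, rule_format, of top 0]
  show ?thesis unfolding s[symmetric] using assms(2) x_top by auto
qed


lemma Arch_iff: "I \<in> Arch \<longleftrightarrow> arch_ideal (I::'a set)" unfolding Arch_def by simp

lemma emb_inj: "I \<in> Arch \<Longrightarrow> J \<in> Arch \<Longrightarrow> emb I = emb J \<Longrightarrow> I = J"
  using fbe unfolding free_bool_ext_def inj_on_def by blast
lemma emb_zero: "emb {0} = bot" using fbe unfolding free_bool_ext_def by blast
lemma emb_UNIV: "emb UNIV = top" using fbe unfolding free_bool_ext_def by blast
lemma emb_int: "I \<in> Arch \<Longrightarrow> J \<in> Arch \<Longrightarrow> emb (I \<inter> J) = inf (emb I) (emb J)"
  using fbe unfolding free_bool_ext_def by blast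
lemma emb_join: "I \<in> Arch \<Longrightarrow> J \<in> Arch \<Longrightarrow> emb (arch_join I J) = sup (emb I) (emb J)"
  using fbe unfolding free_bool_ext_def by blast
lemma gen: "bool_gen (emb ` Arch) = UNIV" using fbe unfolding free_bool_ext_def by blast

lemma Arch_UNIV: "(UNIV::'a set) \<in> Arch" unfolding Arch_iff by (rule A.arch_UNIV)
lemma Arch_zero: "{0::'a} \<in> Arch" unfolding Arch_iff by (rule A.arch_zero)
lemma Arch_int: "I \<in> Arch \<Longrightarrow> J \<in> Arch \<Longrightarrow> I \<inter> J \<in> (Arch::'a set set)"
  unfolding Arch_iff by (rule A.arch_Int)
lemma Arch_join: "arch_join I J \<in> (Arch::'a set set)" unfolding Arch_iff by (rule A.arch_join_arch)

lemma emb_le: "I \<in> Arch \<Longrightarrow> J \<in> Arch \<Longrightarrow> emb I \<le> emb J \<longleftrightarrow> I \<subseteq> J"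
proof
  assume IJ: "I \<in> Arch" "J \<in> Arch" "emb I \<le> emb J"
  then have "emb (I \<inter> J) = emb I" using emb_int by (simp add: inf_absorb1)
  then have "I \<inter> J = I" using IJ Arch_int emb_inj by blast
  then show "I \<subseteq> J" by blast
next
  assume IJ: "I \<in> Arch" "J \<in> Arch" "I \<subseteq> J"
  then have "emb I = inf (emb I) (emb J)" using emb_int[of I J] by (simp add: Int_absorb2)
  then show "emb I \<le> emb J" by (metis inf.absorb_iff1)
qed

lemma NF_inf_term:
  assumes "K1 \<in> Arch" "L1 \<in> Arch" "K2 \<in> Arch" "L2 \<in> Arch"
  shows "inf (inf (emb K1) (- emb L1)) (inf (emb K2) (- emb L2)) \<in> NF emb"
proof -
  have "inf (inf (emb K1) (- emb L1)) (inf (emb K2) (- emb L2))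
      = inf (emb (K1 \<inter> K2)) (- emb (arch_join L1 L2))"
    using assms by (simp add: emb_int emb_join inf_commute inf_left_commute inf_assoc)
  then show ?thesis using assms Arch_int Arch_join by (metis NF_term)
qed

lemma NF_inf: "a \<in> NF emb \<Longrightarrow> b \<in> NF emb \<Longrightarrow> inf a b \<in> NF emb"
proof (induction a rule: NF.induct)
  case NF_bot then show ?case by (simp add: NF.NF_bot)
next
  case (NF_term K L)
  from NF_term.prems show ?case
  proof (induction b rule: NF.induct)
    case NF_bot then show ?case by (simp add: NF.NF_bot)
  next
    case (NF_term K2 L2) then show ?case using \<open>K \<in> Arch\<close> \<open>L \<in> Arch\<close> by (rule_tac NF_inf_term) auto
  next
    case (NF_sup a b) then show ?case by (simp add: inf_sup_distrib1 NF.NF_sup)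
  qed
next
  case (NF_sup a1 a2) then show ?case by (simp add: inf_sup_distrib2 NF.NF_sup)
qed

lemma NF_emb: "I \<in> Arch \<Longrightarrow> emb I \<in> NF emb"
  using NF_term[of I "{0}" emb] Arch_zero by (simp add: emb_zero)
lemma NF_nemb: "I \<in> Arch \<Longrightarrow> - emb I \<in> NF emb"
  using NF_term[of UNIV I emb] Arch_UNIV by (simp add: emb_UNIV)

lemma NF_all: "b \<in> NF emb"
proof -
  have "b \<in> NF emb \<and> - b \<in> NF emb" if "b \<in> bool_gen (emb ` Arch)" for b
    using that
  proof (induction b rule: bool_gen.induct)
    case (base g) then show ?case using NF_emb NF_nemb by auto
  next
    case bot then show ?case using NF_emb[OF Arch_UNIV] by (simp add: emb_UNIV NF.NF_bot)
  next
    case top then show ?case using NF_emb[OF Arch_UNIV] by (simp add: emb_UNIV NF.NF_bot)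
  next
    case (inf a b) then show ?case by (simp add: NF_inf NF.NF_sup)
  next
    case (sup a b) then show ?case by (simp add: NF_inf NF.NF_sup)
  next
    case (compl a) then show ?case by simp
  qed
  then show ?thesis using gen by blast
qed

lemma NF_witness_gen: "b \<in> NF emb \<Longrightarrow> b \<noteq> bot \<Longrightarrow>
   \<exists>K L. K \<in> Arch \<and> L \<in> Arch \<and> inf (emb K) (- emb L) \<noteq> bot \<and> inf (emb K) (- emb L) \<le> b"
proof (induction b rule: NF.induct)
  case NF_bot then show ?case by simp
next
  case (NF_term K L) then show ?case by blast
next
  case (NF_sup a b)
  then show ?case
  proof (cases "a = bot")
    case True then show ?thesis using NF_sup by (auto intro: le_supI2)
  next
    case False then show ?thesis using NF_sup by (meson le_supI1)
  qed
qed

lemma NF_witness: "b \<noteq> bot \<Longrightarrow>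
   \<exists>K L. K \<in> Arch \<and> L \<in> Arch \<and> inf (emb K) (- emb L) \<noteq> bot \<and> inf (emb K) (- emb L) \<le> b"
  using NF_witness_gen NF_all by blast

lemma frame_B:
  assumes K: "K \<in> Arch" and L: "L \<in> Arch" and I: "I \<in> Arch" and KI: "K \<subseteq> I"
    and nb: "inf (emb K) (- emb L) \<noteq> bot"
  shows "\<exists>J\<in>Arch. arch_join J I = UNIV \<and> inf (inf (emb K) (- emb L)) (- emb J) \<noteq> bot"
proof -
  have KL: "\<not> K \<subseteq> L"
  proof
    assume "K \<subseteq> L"
    then have "emb K \<le> emb L" using emb_le[OF K L] by blast
    then show False using nb by (simp add: inf_shunt)
  qed
  obtain J J' where J: "arch_ideal J" "arch_ideal J'" "J \<inter> J' = {0}" "J' \<subseteq> K" "\<not> J' \<subseteq> L"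
    "arch_join J K = UNIV"
  proof -
    have "arch_ideal K" "arch_ideal L" using K L unfolding Arch_iff .
    from A.frame_sep[OF this KL] show ?thesis using that by blast
  qed
  have JA: "J \<in> Arch" "J' \<in> Arch" unfolding Arch_iff using J(1,2) .
  have d: "inf (emb J) (emb J') = bot" using emb_int[OF JA] unfolding J(3) emb_zero by simp
  have J'K: "emb J' \<le> emb K" using emb_le[OF JA(2) K] J(4) by blast
  have J'L: "inf (emb J') (- emb L) \<noteq> bot"
  proof
    assume "inf (emb J') (- emb L) = bot"
    then have "emb J' \<le> emb L" by (simp add: inf_shunt)
    then show False using emb_le[OF JA(2) L] J(5) by blast
  qed
  have J'nJ: "emb J' \<le> - emb J" using d by (simp only: inf_commute[of "emb J" "emb J'"] inf_shunt)
  have 1: "inf (emb J') (- emb L) \<le> inf (emb K) (- emb L)" by (rule inf_mono[OF J'K order_refl])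
  have 2: "inf (emb J') (- emb L) \<le> - emb J" by (rule le_infI1[OF J'nJ])
  have "inf (emb J') (- emb L) \<le> inf (inf (emb K) (- emb L)) (- emb J)" by (rule le_infI[OF 1 2])
  then have "inf (inf (emb K) (- emb L)) (- emb J) \<noteq> bot"
  proof (intro notI)
    assume "inf (emb J') (- emb L) \<le> inf (inf (emb K) (- emb L)) (- emb J)"
      "inf (inf (emb K) (- emb L)) (- emb J) = bot"
    then have "inf (emb J') (- emb L) \<le> bot" by (simp only:)
    then have "inf (emb J') (- emb L) = bot" by (rule le_bot)
    then show False using J'L by (rule notE[rotated])
  qed
  moreover have "arch_join J I = UNIV" using A.arch_join_UNIV_mono KI J(6) by blast
  ultimately show ?thesis using JA by blast
qed


lemma w_witness:
  assumes w0: "0 \<le> w" and nw: "\<not> w \<le> 0"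
  shows "\<exists>g d. g \<noteq> bot \<and> d > 0 \<and> d *\<^sub>R x g \<le> w"
proof -
  obtain S where S: "S \<subseteq> RB_image x" "is_join S w" using x_join by blast
  have "\<exists>s\<in>S. \<not> s \<le> 0"
  proof (rule ccontr)
    assume "\<not> (\<exists>s\<in>S. \<not> s \<le> 0)"
    then have "\<forall>s\<in>S. s \<le> 0" by blast
    then have "w \<le> 0" using S(2) unfolding is_join_def by blast
    then show False using nw by blast
  qed
  then obtain s where s: "s \<in> S" "\<not> s \<le> 0" by blast
  have sw: "s \<le> w" using S(2) s(1) unfolding is_join_def by blast
  obtain g d where g: "g \<noteq> bot" "d > 0" "s * x g = d *\<^sub>R x g"
    using RB_witness[of s] s S(1) by blast
  have "d *\<^sub>R x g = s * x g" using g(3) by simp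
  also have "\<dots> \<le> w * x g" using sw x_ge0 by (rule D.mult_right_mono')
  also have "\<dots> \<le> w" using w0 by (rule mult_x_le)
  finally show ?thesis using g by blast
qed

lemma pos_scale_zero:
  assumes d: "d > 0" and h: "d *\<^sub>R x h \<le> 0"
  shows "h = bot"
proof -
  have "(1 / d) *\<^sub>R (d *\<^sub>R x h) \<le> (1 / d) *\<^sub>R 0" using h d by (intro D.scale_mono) simp_all
  then have "x h \<le> 0" using d by simp
  then have "x h = 0" using x_ge0[of h] by (rule antisym)
  then show ?thesis by (rule x_nz)
qed

lemma ub1:
  assumes I: "I \<in> Arch" and J: "J \<in> Arch" "arch_join J I = UNIV"
  shows "x (- emb J) \<le> x (emb I)"
proof -
  have "sup (emb J) (emb I) = top" using emb_join[OF J(1) I] J(2) emb_UNIV by simp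
  then have "- emb J \<le> emb I" by (simp add: sup_shunt)
  then show ?thesis by (rule x_mono)
qed

lemma part1:
  assumes I: "I \<in> Arch"
  shows "is_join {x (- emb J) | J. J \<in> Arch \<and> arch_join J I = UNIV} (x (emb I))"
proof -
  let ?S = "{x (- emb J) | J. J \<in> Arch \<and> arch_join J I = UNIV}"
  have least: "x (emb I) \<le> u" if u: "\<forall>s\<in>?S. s \<le> u" for u
  proof -
    define e where "e = x (emb I)"
    have "x (- emb UNIV) = 0" by (simp add: emb_UNIV x_bot)
    then have "0 \<in> ?S" using Arch_UNIV A.arch_join_UNIV_left[of I] by (metis (mono_tags, lifting) mem_Collect_eq)
    then have u0: "0 \<le> u" using u by blast
    define u' where "u' = inf u e"
    have e0: "0 \<le> e" unfolding e_def by (rule x_ge0)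
    have u'0: "0 \<le> u'" unfolding u'_def using u0 e0 by (rule le_infI)
    have u'S: "x (- emb J) \<le> u'" if "J \<in> Arch" "arch_join J I = UNIV" for J
    proof -
      have "x (- emb J) \<le> u" using u that by blast
      moreover have "x (- emb J) \<le> e" unfolding e_def using I that by (rule ub1)
      ultimately show ?thesis unfolding u'_def by (rule le_infI)
    qed
    define w where "w = e - u'"
    have "u' \<le> e" unfolding u'_def by (rule inf_le2)
    then have w0: "0 \<le> w" unfolding w_def by (simp only: D.le_diff_iff)
    have "w \<le> 0"
    proof (rule ccontr)
      assume nw: "\<not> w \<le> 0"
      obtain g d where g: "g \<noteq> bot" "d > 0" "d *\<^sub>R x g \<le> w" using w_witness w0 nw by blast
      have eI: "e * x (- emb I) = 0" unfolding e_def by (intro x_disj) simp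
      have gI: "g \<le> emb I"
      proof -
        have "d *\<^sub>R x (inf g (- emb I)) = (d *\<^sub>R x g) * x (- emb I)" by (simp add: x_inf)
        also have "\<dots> \<le> w * x (- emb I)" using g(3) x_ge0 by (rule D.mult_right_mono')
        also have "w * x (- emb I) = 0 - u' * x (- emb I)"
          unfolding w_def by (simp only: left_diff_distrib eI)
        also have "\<dots> \<le> 0" using D.mult_pos[OF u'0 x_ge0] by (simp only: D.L.diff_le_0_iff_le)
        finally have "d *\<^sub>R x (inf g (- emb I)) \<le> 0" .
        then have "inf g (- emb I) = bot" by (rule pos_scale_zero[OF g(2)])
        then show ?thesis by (simp add: inf_shunt)
      qed
      obtain K L where KL: "K \<in> Arch" "L \<in> Arch" "inf (emb K) (- emb L) \<noteq> bot"
          "inf (emb K) (- emb L) \<le> g"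
        using NF_witness[OF g(1)] by blast
      define K' where "K' = K \<inter> I"
      have K'A: "K' \<in> Arch" unfolding K'_def using KL(1) I by (rule Arch_int)
      have KLI: "inf (emb K) (- emb L) \<le> emb I" using KL(4) gI by (rule order_trans)
      have t0: "inf (emb K') (- emb L) = inf (emb K) (- emb L)"
      proof -
        have "inf (emb K') (- emb L) = inf (inf (emb K) (- emb L)) (emb I)"
          unfolding K'_def emb_int[OF KL(1) I] by (simp add: inf_commute inf_left_commute)
        also have "\<dots> = inf (emb K) (- emb L)" using KLI by (simp add: inf_absorb1)
        finally show ?thesis .
      qed
      have "K' \<subseteq> I" unfolding K'_def by blast
      from frame_B[OF K'A KL(2) I this] t0 KL(3)
      obtain J where J: "J \<in> Arch" "arch_join J I = UNIV"
          "inf (inf (emb K) (- emb L)) (- emb J) \<noteq> bot" by auto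
      define h where "h = inf (inf (emb K) (- emb L)) (- emb J)"
      have hnb: "h \<noteq> bot" using J(3) unfolding h_def .
      have hg: "h \<le> g" unfolding h_def using KL(4) by (rule le_infI1)
      have hI: "h \<le> emb I" using hg gI by (rule order_trans)
      have hJ: "h \<le> - emb J" unfolding h_def by (rule inf_le2)
      have xg: "x g * x h = x h" using hg unfolding x_inf[symmetric] by (simp add: inf_absorb2)
      have xe: "e * x h = x h" using hI unfolding e_def x_inf[symmetric] by (simp add: inf_absorb2)
      have xJ: "x (- emb J) * x h = x h" using hJ unfolding x_inf[symmetric] by (simp add: inf_absorb2)
      have xu: "x h \<le> u' * x h"
        using D.mult_right_mono'[OF u'S[OF J(1) J(2)] x_ge0[of h]] unfolding xJ .
      have "d *\<^sub>R x h = (d *\<^sub>R x g) * x h" using xg by simp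
      also have "\<dots> \<le> w * x h" using g(3) x_ge0 by (rule D.mult_right_mono')
      also have "w * x h = x h - u' * x h" unfolding w_def by (simp only: left_diff_distrib xe)
      also have "\<dots> \<le> 0" using xu by (simp only: D.L.diff_le_0_iff_le)
      finally have "d *\<^sub>R x h \<le> 0" .
      then have "h = bot" by (rule pos_scale_zero[OF g(2)])
      then show False using hnb by blast
    qed
    then have "e \<le> u'" unfolding w_def by (simp only: D.L.diff_le_0_iff_le)
    then show ?thesis unfolding e_def u'_def by simp
  qed
  have ub: "\<forall>s\<in>?S. s \<le> x (emb I)" using ub1[OF I] by blast
  show ?thesis unfolding is_join_def using ub least by blast
qed


lemma scale_left_mono: "a \<le> b \<Longrightarrow> 0 \<le> v \<Longrightarrow> a *\<^sub>R v \<le> b *\<^sub>R (v::'d)"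
proof -
  assume "a \<le> b" "0 \<le> v"
  then have "0 \<le> (b - a) *\<^sub>R v" by (intro D.scale_pos) simp_all
  then show ?thesis by (simp only: scaleR_left_diff_distrib D.le_diff_iff)
qed

lemma x_nz': "x e \<noteq> 0 \<Longrightarrow> e \<noteq> bot" using x_bot by blast

lemma R_bdd:
  assumes f0: "0 \<le> f" and ne: "x e \<noteq> 0"
  shows "bdd_above {r. 0 \<le> r \<and> r *\<^sub>R x e \<le> f}"
proof -
  obtain n :: nat where n: "f \<le> of_nat n" using D.bounded by blast
  have "r \<le> real n" if r: "0 \<le> r" "r *\<^sub>R x e \<le> f" for r
  proof (rule ccontr)
    assume "\<not> r \<le> real n"
    then have rn: "real n < r" by simp
    have "r *\<^sub>R x e \<le> real n *\<^sub>R 1" using r(2) n by (simp add: D.of_nat_scaleR)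
    then have "(r *\<^sub>R x e) * x e \<le> (real n *\<^sub>R 1) * x e" using x_ge0 by (rule D.mult_right_mono')
    then have "r *\<^sub>R x e \<le> real n *\<^sub>R x e" by (simp add: x_idem)
    then have "(r - real n) *\<^sub>R x e \<le> 0" by (simp only: scaleR_left_diff_distrib D.L.diff_le_0_iff_le)
    then have "e = bot" using rn by (intro pos_scale_zero[of "r - real n"]) simp_all
    then show False using ne x_bot by simp
  qed
  then show ?thesis unfolding bdd_above_def by blast
qed

lemma R_closed:
  assumes f0: "0 \<le> f" and ne: "x e \<noteq> 0"
  shows "Sup {r. 0 \<le> r \<and> r *\<^sub>R x e \<le> f} *\<^sub>R x e \<le> f"
proof -
  let ?R = "{r. 0 \<le> r \<and> r *\<^sub>R x e \<le> f}"
  define S where "S = Sup ?R"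
  have bdd: "bdd_above ?R" using f0 ne by (rule R_bdd)
  have nem: "?R \<noteq> {}" using f0 by auto
  have "of_nat k * (S *\<^sub>R x e - f) \<le> 1" if k: "k \<ge> 1" for k :: nat
  proof -
    have "S - 1 / real k < S" using k by simp
    then obtain r where r: "r \<in> ?R" "S - 1 / real k < r" unfolding S_def
      using less_cSup_iff[OF nem bdd] by blast
    have "S *\<^sub>R x e - f \<le> S *\<^sub>R x e - r *\<^sub>R x e" using r(1) by (simp add: D.L.diff_left_mono)
    also have "\<dots> = (S - r) *\<^sub>R x e" by (simp add: scaleR_left_diff_distrib)
    also have "\<dots> \<le> (1 / real k) *\<^sub>R x e" using r(2) x_ge0 by (intro scale_left_mono) simp_all
    finally have "real k *\<^sub>R (S *\<^sub>R x e - f) \<le> real k *\<^sub>R ((1 / real k) *\<^sub>R x e)"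
      by (intro D.scale_mono) simp_all
    also have "\<dots> = x e" using k by simp
    also have "\<dots> \<le> 1" by (rule x_le1)
    finally show ?thesis by (simp only: D.of_nat_mult_scale)
  qed
  then have "S *\<^sub>R x e - f \<le> 0" by (rule D.archim)
  then show ?thesis unfolding S_def by (simp only: D.L.diff_le_0_iff_le)
qed

lemma part2:
  assumes f0: "0 \<le> f"
  shows "\<exists>r :: 'a set \<Rightarrow> real. (\<forall>I\<in>Arch. 0 \<le> r I) \<and>
            is_join {r I *\<^sub>R x (- emb I) | I. I \<in> Arch} f"
proof -
  define R where "R e = {r. 0 \<le> r \<and> r *\<^sub>R x e \<le> f}" for e
  define rr where "rr I = (if x (- emb I) = 0 then 0 else Sup (R (- emb I)))" for I
  have R0: "0 \<in> R e" for e unfolding R_def using f0 by simp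
  have rr0: "0 \<le> rr I" for I
  proof (cases "x (- emb I) = 0")
    case False
    then have "0 \<le> Sup (R (- emb I))" using R0 R_bdd[OF f0 False] unfolding R_def
      by (intro cSup_upper) auto
    then show ?thesis unfolding rr_def using False by simp
  qed (simp add: rr_def)
  have rrub: "rr I *\<^sub>R x (- emb I) \<le> f" for I
  proof (cases "x (- emb I) = 0")
    case False
    then show ?thesis unfolding rr_def R_def using R_closed[OF f0 False] by simp
  qed (simp add: rr_def f0)
  have rrmax: "q \<le> rr I" if "x (- emb I) \<noteq> 0" "0 \<le> q" "q *\<^sub>R x (- emb I) \<le> f" for q I
    unfolding rr_def R_def using that R_bdd[OF f0 that(1)] by (auto intro: cSup_upper)
  let ?S = "{rr I *\<^sub>R x (- emb I) | I. I \<in> Arch}"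
  have least: "f \<le> u" if u: "\<forall>s\<in>?S. s \<le> u" for u
  proof -
    define u' where "u' = inf u f"
    have u'S: "rr I *\<^sub>R x (- emb I) \<le> u'" if "I \<in> Arch" for I
      unfolding u'_def using u that rrub by (blast intro: le_infI)
    define w where "w = f - u'"
    have "u' \<le> f" unfolding u'_def by (rule inf_le2)
    then have w0: "0 \<le> w" unfolding w_def by (simp only: D.le_diff_iff)
    have "w \<le> 0"
    proof (rule ccontr)
      assume nw: "\<not> w \<le> 0"
      obtain g d where g: "g \<noteq> bot" "d > 0" "d *\<^sub>R x g \<le> w" using w_witness w0 nw by blast
      obtain K L where KL: "K \<in> Arch" "L \<in> Arch" "inf (emb K) (- emb L) \<noteq> bot"
          "inf (emb K) (- emb L) \<le> g"
        using NF_witness[OF g(1)] by blast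
      from frame_B[OF KL(1) KL(2) KL(1) order_refl KL(3)]
      obtain J where J: "J \<in> Arch" "arch_join J K = UNIV"
          "inf (inf (emb K) (- emb L)) (- emb J) \<noteq> bot" by blast
      define h where "h = inf (inf (emb K) (- emb L)) (- emb J)"
      define I0 where "I0 = arch_join J L"
      have I0A: "I0 \<in> Arch" unfolding I0_def by (rule Arch_join)
      have "sup (emb J) (emb K) = top" using emb_join[OF J(1) KL(1)] J(2) emb_UNIV by simp
      then have JK: "- emb J \<le> emb K" by (simp add: sup_shunt)
      have hI0: "- emb I0 = h"
      proof -
        have "- emb I0 = inf (- emb J) (- emb L)" unfolding I0_def emb_join[OF J(1) KL(2)] by simp
        also have "\<dots> = inf (inf (emb K) (- emb J)) (- emb L)" using JK by (simp add: inf_absorb2)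
        also have "\<dots> = h" unfolding h_def by (simp add: inf_commute inf_left_commute)
        finally show ?thesis .
      qed
      have hnb: "h \<noteq> bot" using J(3) unfolding h_def .
      have hg: "h \<le> g" unfolding h_def using KL(4) by (rule le_infI1)
      have zne: "x h \<noteq> 0" using hnb x_nz by blast
      have xg: "x g * x h = x h" using hg unfolding x_inf[symmetric] by (simp add: inf_absorb2)
      have "d *\<^sub>R x h = (d *\<^sub>R x g) * x h" using xg by simp
      also have "\<dots> \<le> w * x h" using g(3) x_ge0 by (rule D.mult_right_mono')
      also have "w * x h = f * x h - u' * x h" unfolding w_def by (simp only: left_diff_distrib)
      finally have 1: "d *\<^sub>R x h \<le> f * x h - u' * x h" .
      have "(rr I0 *\<^sub>R x h) * x h \<le> u' * x h"
        using u'S[OF I0A] x_ge0 unfolding hI0 by (rule D.mult_right_mono')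
      then have 2: "rr I0 *\<^sub>R x h \<le> u' * x h" by (simp add: x_idem)
      have "(rr I0 + d) *\<^sub>R x h = rr I0 *\<^sub>R x h + d *\<^sub>R x h" by (simp add: scaleR_left_distrib)
      also have "\<dots> \<le> u' * x h + (f * x h - u' * x h)" using 2 1 by (rule D.L.add_mono)
      also have "\<dots> = f * x h" by simp
      also have "\<dots> \<le> f" using f0 by (rule mult_x_le)
      finally have "(rr I0 + d) *\<^sub>R x (- emb I0) \<le> f" unfolding hI0 .
      moreover have "0 \<le> rr I0 + d" using rr0[of I0] g(2) by simp
      moreover have "x (- emb I0) \<noteq> 0" unfolding hI0 by (rule zne)
      ultimately have "rr I0 + d \<le> rr I0" using rrmax by blast
      then show False using g(2) by simp
    qed
    then have "f \<le> u'" unfolding w_def by (simp only: D.L.diff_le_0_iff_le)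
    then show ?thesis unfolding u'_def by simp
  qed
  have ub: "\<forall>s\<in>?S. s \<le> f" using rrub by blast
  show ?thesis using rr0 ub least unfolding is_join_def by blast
qed

lemma part3:
  assumes t0: "0 \<le> t" and r0: "\<forall>I\<in>Arch. 0 \<le> r I"
    and fj: "is_join {r I *\<^sub>R x (- emb I) | I. I \<in> Arch} f"
  shows "is_join {(t + r I) *\<^sub>R x (- emb I) | I. I \<in> Arch} (f + t *\<^sub>R 1)"
proof -
  have fub: "r I *\<^sub>R x (- emb I) \<le> f" if "I \<in> Arch" for I using fj that unfolding is_join_def by blast
  have ub: "(t + r I) *\<^sub>R x (- emb I) \<le> f + t *\<^sub>R 1" if I: "I \<in> Arch" for I
  proof -
    have "(t + r I) *\<^sub>R x (- emb I) = r I *\<^sub>R x (- emb I) + t *\<^sub>R x (- emb I)"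
      by (simp add: scaleR_left_distrib add.commute)
    also have "\<dots> \<le> f + t *\<^sub>R 1" using fub[OF I] D.scale_mono[OF x_le1 t0] by (rule D.L.add_mono)
    finally show ?thesis .
  qed
  have least: "f + t *\<^sub>R 1 \<le> u" if u: "\<forall>s\<in>{(t + r I) *\<^sub>R x (- emb I) | I. I \<in> Arch}. s \<le> u" for u
  proof -
    have "(t + r {0}) *\<^sub>R x (- emb {0}) \<le> u" using u Arch_zero by blast
    then have "(t + r {0}) *\<^sub>R 1 \<le> u" by (simp add: emb_zero x_top)
    moreover have "t *\<^sub>R (1::'d) \<le> (t + r {0}) *\<^sub>R 1"
      using r0 Arch_zero D.one_ge0 by (intro scale_left_mono) auto
    ultimately have tu: "t *\<^sub>R 1 \<le> u" by (rule order_trans[rotated])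
    have "r I *\<^sub>R x (- emb I) \<le> u - t *\<^sub>R 1" if I: "I \<in> Arch" for I
    proof -
      define z where "z = x (- emb I)"
      define z' where "z' = x (- (- emb I))"
      have zz: "z + z' = 1" unfolding z_def z'_def x_compl by simp
      have uz: "(t + r I) *\<^sub>R z \<le> u" using u I unfolding z_def by blast
      have "((t + r I) *\<^sub>R z) * z \<le> u * z"
        using uz x_ge0 unfolding z_def by (rule D.mult_right_mono')
      then have 1: "(t + r I) *\<^sub>R z \<le> u * z" by (simp add: z_def x_idem)
      have "(t *\<^sub>R 1) * z' \<le> u * z'"
        using tu x_ge0 unfolding z'_def by (rule D.mult_right_mono')
      then have 2: "t *\<^sub>R z' \<le> u * z'" by simp
      have "(t + r I) *\<^sub>R z + t *\<^sub>R z' = r I *\<^sub>R z + t *\<^sub>R (z + z')"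
        by (simp add: scaleR_left_distrib scaleR_right_distrib algebra_simps)
      then have "r I *\<^sub>R z + t *\<^sub>R 1 = (t + r I) *\<^sub>R z + t *\<^sub>R z'" unfolding zz by simp
      also have "\<dots> \<le> u * z + u * z'" using 1 2 by (rule D.L.add_mono)
      also have "\<dots> = u" using zz by (simp add: distrib_left[symmetric])
      finally show ?thesis unfolding z_def by (simp only: D.L.le_diff_eq)
    qed
    then have "f \<le> u - t *\<^sub>R 1" using fj unfolding is_join_def by blast
    then show ?thesis by (simp only: D.L.le_diff_eq)
  qed
  show ?thesis unfolding is_join_def using ub least by blast
qed

end

theorem lemmaA3:
  fixes emb :: "'a::{comm_ring_1, real_algebra_1, lattice} set \<Rightarrow> 'b::boolean_algebra"
    and x :: "'b \<Rightarrow> 'd::{comm_ring_1, real_algebra_1, lattice}"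
  assumes "bal_algebra TYPE('a)"
    and "free_bool_ext emb"
    and "dedekind_completion_RB x"
  shows "(\<forall>I\<in>Arch. is_join {x (- emb J) | J. J \<in> Arch \<and> arch_join J I = UNIV} (x (emb I)))
    \<and> (\<forall>f::'d. 0 \<le> f \<longrightarrow>
         (\<exists>r :: 'a set \<Rightarrow> real. (\<forall>I\<in>Arch. 0 \<le> r I) \<and>
            is_join {r I *\<^sub>R x (- emb I) | I. I \<in> Arch} f))
    \<and> (\<forall>(f::'d) (t::real) (r :: 'a set \<Rightarrow> real).
         0 \<le> f \<longrightarrow> 0 \<le> t \<longrightarrow> (\<forall>I\<in>Arch. 0 \<le> r I) \<longrightarrow>
         is_join {r I *\<^sub>R x (- emb I) | I. I \<in> Arch} f \<longrightarrow>
         is_join {(t + r I) *\<^sub>R x (- emb I) | I. I \<in> Arch} (f + t *\<^sub>R 1))"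
proof -
  have bd: "bal_algebra TYPE('d)" using assms(3) unfolding dedekind_completion_RB_def by blast
  interpret setting "TYPE('a)" "TYPE('d)" emb x
    using assms(1,2,3) bd by (intro setting.intro bal.intro setting_axioms.intro)
  show ?thesis using part1 part2 part3 by blast
qed

end
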